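(* Let $E\subset[0,1)$ be a measurable set of positive Lebesgue measure and let $T\in\mathrm{IET}$. Then there exist $x_0\in[0,1)$ and constants $\alpha>0$, $\beta>0$ such that for all $n\geq 1$, $$\#\{i : 0\leq i<n,\ T^i(x_0)\in E\}\geq \alpha n-\beta.$$
   Context: $\mathrm{IET}$ denotes the group of interval exchange transformations of $[0,1)$: bijections of $[0,1)$ that are orientation-preserving piecewise isometries (piecewise translations), left-continuous, with finitely many discontinuity points. *)

theory Defs
  imports "HOL-Analysis.Analysis"
begin

definition IET :: "(real \<Rightarrow> real) \<Rightarrow> bool" where
  "IET T \<longleftrightarrow> bij_betw T {0..<1} {0..<1} \<and>
     (\<exists>D::real set. finite D \<and>
        (\<forall>a b. a < b \<and> {a..<b} \<subseteq> {0..<1} \<and> D \<inter> {a<..<b} = {} \<longrightarrow>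
           (\<exists>c. \<forall>x\<in>{a..<b}. T x = x + c)))"

end

theory Submission
  imports Defs
begin

lemma trans_emeasure: "emeasure lebesgue ((\<lambda>x::real. x + c) ` S) = emeasure lebesgue S"
  using emeasure_lebesgue_affine[of 1 c S] by simp

lemma iet_pre:
  assumes T: "IET T" and A: "A \<in> sets lebesgue" "A \<subseteq> {0..<1}"
  shows "{x\<in>{0..<1}. T x \<in> A} \<in> sets lebesgue \<and>
         emeasure lebesgue {x\<in>{0..<1}. T x \<in> A} = emeasure lebesgue A"
proof -
  have bij: "bij_betw T {0..<1} {0..<1}" using T unfolding IET_def by blast
  obtain D :: "real set" where fD: "finite D" and Dp:
    "\<And>a b. a < b \<Longrightarrow> {a..<b} \<subseteq> {0..<1} \<Longrightarrow> D \<inter> {a<..<b} = {} \<Longrightarrow> \<exists>c. \<forall>x\<in>{a..<b}. T x = x + c"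
    using T unfolding IET_def by blast
  define D' where "D' = insert 0 (insert 1 (D \<inter> {0<..<1}))"
  define P where "P = insert 0 (D \<inter> {0<..<1})"
  have fD': "finite D'" "finite P" using fD by (auto simp: D'_def P_def)
  have PD': "P \<subseteq> D'" by (auto simp: P_def D'_def)
  have P01: "P \<subseteq> {0..<1}" by (auto simp: P_def)
  define nx where "nx d = Min {e\<in>D'. e > d}" for d
  have nx: "nx d \<in> D' \<and> d < nx d \<and> nx d \<le> 1 \<and> (\<forall>e\<in>D'. e > d \<longrightarrow> nx d \<le> e)" if "d \<in> P" for d
  proof -
    have "1 \<in> {e\<in>D'. e > d}" using that P01 by (auto simp: D'_def)
    then have ne: "{e\<in>D'. e > d} \<noteq> {}" by blast
    have f: "finite {e\<in>D'. e > d}" using fD' by auto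
    have "nx d \<in> {e\<in>D'. e > d}" unfolding nx_def using Min_in[OF f ne] .
    moreover have "nx d \<le> 1" unfolding nx_def using that P01 by (intro Min_le f) (auto simp: D'_def)
    moreover have "\<forall>e\<in>D'. e > d \<longrightarrow> nx d \<le> e" unfolding nx_def using f by auto
    ultimately show ?thesis by auto
  qed
  define I where "I d = {d..<nx d}" for d
  have Isub: "I d \<subseteq> {0..<1}" if "d \<in> P" for d
    using nx[OF that] P01 that by (auto simp: I_def)
  have "\<exists>c. \<forall>x\<in>I d. T x = x + c" if "d \<in> P" for d
  proof -
    have "D \<inter> {d<..<nx d} = {}"
    proof (rule ccontr)
      assume "D \<inter> {d<..<nx d} \<noteq> {}"
      then obtain e where e: "e \<in> D" "d < e" "e < nx d" by auto
      have "e \<in> D'" using e nx[OF that] P01 that by (auto simp: D'_def)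
      then show False using nx[OF that] e by force
    qed
    then show ?thesis using Dp[of d "nx d"] nx[OF that] Isub[OF that] unfolding I_def by auto
  qed
  then obtain c where c: "\<And>d x. d \<in> P \<Longrightarrow> x \<in> I d \<Longrightarrow> T x = x + c d" by metis
  have disj: "I d1 \<inter> I d2 = {}" if "d1 \<in> P" "d2 \<in> P" "d1 \<noteq> d2" for d1 d2
  proof (cases "d1 < d2")
    case True
    then have "nx d1 \<le> d2" using nx[OF that(1)] that PD' by auto
    then show ?thesis by (auto simp: I_def)
  next
    case False
    then have "d2 < d1" using that by auto
    then have "nx d2 \<le> d1" using nx[OF that(2)] that PD' by auto
    then show ?thesis by (auto simp: I_def)
  qed
  have cover: "{0..<1} = (\<Union>d\<in>P. I d)"
  proof
    show "(\<Union>d\<in>P. I d) \<subseteq> {0..<1}" using Isub by auto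
    show "{0..<1} \<subseteq> (\<Union>d\<in>P. I d)"
    proof
      fix x :: real assume x: "x \<in> {0..<1}"
      define d where "d = Max {e\<in>P. e \<le> x}"
      have f: "finite {e\<in>P. e \<le> x}" using fD' by auto
      have ne: "{e\<in>P. e \<le> x} \<noteq> {}" using x by (auto simp: P_def)
      have dP: "d \<in> P" "d \<le> x" using Max_in[OF f ne] unfolding d_def by auto
      have dmax: "\<And>e. e \<in> P \<Longrightarrow> e \<le> x \<Longrightarrow> e \<le> d" unfolding d_def using f by auto
      have "x < nx d"
      proof (rule ccontr)
        assume "\<not> x < nx d"
        then have h: "nx d \<le> x" by auto
        have "nx d \<in> P" using nx[OF dP(1)] h x P01 dP by (auto simp: D'_def P_def)
        then have "nx d \<le> d" using dmax h by auto
        then show False using nx[OF dP(1)] by auto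
      qed
      then show "x \<in> (\<Union>d\<in>P. I d)" using dP by (auto simp: I_def)
    qed
  qed
  define F where "F d = {x \<in> I d. T x \<in> A}" for d
  define H where "H d = T ` I d \<inter> A" for d
  have HF: "H d = (\<lambda>x. x + c d) ` F d" if "d \<in> P" for d
    using c[OF that] unfolding H_def F_def by force
  have FH: "F d = (\<lambda>x. - c d + x) ` H d" if "d \<in> P" for d
    unfolding HF[OF that] image_image by simp
  have Hs: "H d \<in> sets lebesgue" if "d \<in> P" for d
  proof -
    have "T ` I d = (\<lambda>x. c d + x) ` I d" using c[OF that] by (force simp: add.commute)
    moreover have "I d \<in> sets lebesgue" by (simp add: I_def)
    ultimately show ?thesis unfolding H_def using A by (metis lebesgue_sets_translation sets.Int)
  qed
  have Fs: "F d \<in> sets lebesgue" if "d \<in> P" for d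
    unfolding FH[OF that] using Hs[OF that] by (rule lebesgue_sets_translation)
  have FHm: "emeasure lebesgue (F d) = emeasure lebesgue (H d)" if "d \<in> P" for d
    unfolding HF[OF that] trans_emeasure ..
  have pre: "{x\<in>{0..<1}. T x \<in> A} = (\<Union>d\<in>P. F d)"
    using cover unfolding F_def by auto
  have injT: "inj_on T {0..<1}" using bij bij_betw_def by blast
  have Hdisj: "disjoint_family_on H P"
    unfolding disjoint_family_on_def H_def
  proof (intro ballI impI)
    fix d1 d2 assume "d1 \<in> P" "d2 \<in> P" "d1 \<noteq> d2"
    then have "I d1 \<inter> I d2 = {}" "I d1 \<subseteq> {0..<1}" "I d2 \<subseteq> {0..<1}" using disj Isub by auto
    then have "T ` I d1 \<inter> T ` I d2 = {}" using injT unfolding inj_on_def by blast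
    then show "T ` I d1 \<inter> A \<inter> (T ` I d2 \<inter> A) = {}" by auto
  qed
  have Fdisj: "disjoint_family_on F P"
    using disj unfolding disjoint_family_on_def F_def by auto
  have Hun: "(\<Union>d\<in>P. H d) = A"
  proof -
    have "(\<Union>d\<in>P. H d) = T ` (\<Union>d\<in>P. I d) \<inter> A" unfolding H_def by auto
    also have "\<dots> = A" using cover bij A(2) unfolding bij_betw_def by auto
    finally show ?thesis .
  qed
  have "emeasure lebesgue (\<Union>d\<in>P. F d) = (\<Sum>d\<in>P. emeasure lebesgue (F d))"
    using sum_emeasure[of F P lebesgue] Fs Fdisj fD'(2) by (metis image_subsetI)
  also have "\<dots> = (\<Sum>d\<in>P. emeasure lebesgue (H d))" using FHm by simp
  also have "\<dots> = emeasure lebesgue (\<Union>d\<in>P. H d)"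
    using sum_emeasure[of H P lebesgue] Hs Hdisj fD'(2) by (metis image_subsetI)
  finally have "emeasure lebesgue (\<Union>d\<in>P. F d) = emeasure lebesgue A" using Hun by simp
  moreover have "(\<Union>d\<in>P. F d) \<in> sets lebesgue" using Fs fD'(2) by blast
  ultimately show ?thesis using pre by simp
qed


lemma iter_maps:
  assumes T: "IET T" and x: "x \<in> {0..<1::real}"
  shows "(T ^^ i) x \<in> {0..<1}"
proof (induction i)
  case 0 then show ?case using x by simp
next
  case (Suc i)
  have "bij_betw T {0..<1} {0..<1}" using T unfolding IET_def by blast
  then show ?case using Suc by (auto dest: bij_betwE)
qed

lemma iter_pre:
  assumes T: "IET T" and A: "A \<in> sets lebesgue" "A \<subseteq> {0..<1}"
  shows "{x\<in>{0..<1}. (T ^^ i) x \<in> A} \<in> sets lebesgue \<and>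
         emeasure lebesgue {x\<in>{0..<1}. (T ^^ i) x \<in> A} = emeasure lebesgue A"
proof (induction i)
  case 0
  have "{x\<in>{0..<1}. (T ^^ 0) x \<in> A} = A" using A by auto
  then show ?case using A by simp
next
  case (Suc i)
  let ?Y = "{x\<in>{0..<1}. (T ^^ i) x \<in> A}"
  have "bij_betw T {0..<1} {0..<1}" using T unfolding IET_def by blast
  moreover have "\<And>x. (T ^^ Suc i) x = (T ^^ i) (T x)" by (simp add: funpow_swap1)
  ultimately have "{x\<in>{0..<1}. (T ^^ Suc i) x \<in> A} = {x\<in>{0..<1}. T x \<in> ?Y}"
    by (auto simp del: funpow.simps dest: bij_betwE)
  note eq = this
  have Y: "?Y \<in> sets lebesgue" "emeasure lebesgue ?Y = emeasure lebesgue A" using Suc by auto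
  have "{x\<in>{0..<1}. T x \<in> ?Y} \<in> sets lebesgue \<and> emeasure lebesgue {x\<in>{0..<1}. T x \<in> ?Y} = emeasure lebesgue ?Y"
    by (rule iet_pre[OF T Y(1)]) auto
  then show ?case unfolding eq using Y(2) by metis
qed

lemma comb:
  fixes a b :: "nat \<Rightarrow> real" and \<alpha> :: real
  assumes a0: "\<And>i. 0 \<le> a i" and a1: "\<And>i. a i \<le> 1" and b01: "\<And>i. b i = 0 \<or> b i = 1"
    and al: "\<alpha> \<ge> 0"
    and hyp: "\<And>i. b i = 0 \<Longrightarrow> \<exists>n. 1 \<le> n \<and> n \<le> N \<and> (\<Sum>j\<in>{i..<n+i}. a j) < \<alpha> * real n"
  shows "(\<Sum>i\<in>{k..<L}. a i) \<le> \<alpha> * real (L - k) + real N + (\<Sum>i\<in>{k..<L}. b i)"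
proof -
  have b0: "\<And>i. 0 \<le> b i" using b01 by (metis order_refl zero_le_one)
  have main: "\<forall>k. L - k = d \<longrightarrow> (\<Sum>i\<in>{k..<L}. a i) \<le> \<alpha> * real (L - k) + real N + (\<Sum>i\<in>{k..<L}. b i)" for d
  proof (induction d rule: less_induct)
  case (less d)
  show ?case
  proof (intro allI impI)
  fix k assume dk: "L - k = d"
  show "(\<Sum>i\<in>{k..<L}. a i) \<le> \<alpha> * real (L - k) + real N + (\<Sum>i\<in>{k..<L}. b i)"
  proof (cases "k < L")
    case False
    then show ?thesis using al by simp
  next
    case kL: True
    have sa: "(\<Sum>i\<in>{k..<L}. a i) = a k + (\<Sum>i\<in>{Suc k..<L}. a i)"
      using kL by (simp add: sum.atLeast_Suc_lessThan)
    have sb: "(\<Sum>i\<in>{k..<L}. b i) = b k + (\<Sum>i\<in>{Suc k..<L}. b i)"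
      using kL by (simp add: sum.atLeast_Suc_lessThan)
    show ?thesis
    proof (cases "b k = 0")
      case False
      then have "b k = 1" using b01 by metis
      moreover have "(\<Sum>i\<in>{Suc k..<L}. a i) \<le> \<alpha> * real (L - Suc k) + real N + (\<Sum>i\<in>{Suc k..<L}. b i)"
        using less.IH[of "L - Suc k"] kL dk by auto
      moreover have "\<alpha> * real (L - Suc k) \<le> \<alpha> * real (L - k)"
        using al by (intro mult_left_mono) auto
      ultimately show ?thesis using sa sb a1[of k] by linarith
    next
      case True
      obtain n where n: "1 \<le> n" "n \<le> N" "(\<Sum>j\<in>{k..<n+k}. a j) < \<alpha> * real n"
        using hyp[OF True] by blast
      show ?thesis
      proof (cases "n + k \<le> L")
        case True
        have IH: "(\<Sum>i\<in>{n+k..<L}. a i) \<le> \<alpha> * real (L - (n+k)) + real N + (\<Sum>i\<in>{n+k..<L}. b i)"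
          using less.IH[of "L - (n+k)"] n kL dk by auto
        have c1: "(\<Sum>i\<in>{k..<L}. a i) = (\<Sum>i\<in>{k..<n+k}. a i) + (\<Sum>i\<in>{n+k..<L}. a i)"
          using True by (simp add: sum.atLeastLessThan_concat)
        have c2: "(\<Sum>i\<in>{k..<L}. b i) = (\<Sum>i\<in>{k..<n+k}. b i) + (\<Sum>i\<in>{n+k..<L}. b i)"
          using True by (simp add: sum.atLeastLessThan_concat)
        have "0 \<le> (\<Sum>i\<in>{k..<n+k}. b i)" using b0 by (simp add: sum_nonneg)
        moreover have h: "real (L - k) = real n + real (L - (n+k))" using True by simp
        have "\<alpha> * real (L - k) = \<alpha> * (real n + real (L - (n+k)))" by (subst h) (rule refl)
        then have "\<alpha> * real (L - k) = \<alpha> * real n + \<alpha> * real (L - (n+k))" by (simp only: distrib_left)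
        ultimately show ?thesis using c1 c2 IH n(3) by linarith
      next
        case False
        have "(\<Sum>i\<in>{k..<L}. a i) \<le> of_nat (card {k..<L}) * 1"
          using a1 by (intro sum_bounded_above) auto
        then have "(\<Sum>i\<in>{k..<L}. a i) \<le> real N" using False n by simp
        moreover have "0 \<le> (\<Sum>i\<in>{k..<L}. b i)" using b0 by (simp add: sum_nonneg)
        moreover have "0 \<le> \<alpha> * real (L - k)" using al by simp
        ultimately show ?thesis by linarith
      qed
    qed
  qed
  qed
  qed
  then show ?thesis by blast
qed


lemma sub01_props:
  assumes "A \<in> sets lebesgue" "A \<subseteq> {0..<1::real}"
  shows "emeasure lebesgue A \<le> 1" "integrable lebesgue (indicator A :: real \<Rightarrow> real)"
    "integral\<^sup>L lebesgue (indicator A :: real \<Rightarrow> real) = measure lebesgue A"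
proof -
  have "emeasure lebesgue A \<le> emeasure lebesgue {0..<1::real}"
    using assms by (intro emeasure_mono) auto
  also have "\<dots> = 1" by simp
  finally show e: "emeasure lebesgue A \<le> 1" .
  then have "emeasure lebesgue A < \<infinity>" by (simp add: order_le_less_trans)
  then show "integrable lebesgue (indicator A :: real \<Rightarrow> real)" using assms by simp
  show "integral\<^sup>L lebesgue (indicator A :: real \<Rightarrow> real) = measure lebesgue A" by simp
qed

lemma card_sum:
  fixes n :: nat shows "real (card {i. i < n \<and> P i}) = (\<Sum>i<n. if P i then 1 else 0)"
proof (induction n)
  case 0 then show ?case by simp
next
  case (Suc n)
  show ?case
  proof (cases "P n")
    case True
    then have "{i. i < Suc n \<and> P i} = insert n {i. i < n \<and> P i}" by auto
    then show ?thesis using Suc True by simp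
  next
    case False
    then have "{i. i < Suc n \<and> P i} = {i. i < n \<and> P i}" using less_Suc_eq by auto
    then show ?thesis using Suc False by simp
  qed
qed


theorem mainTheorem16:
  fixes E :: "real set" and T :: "real \<Rightarrow> real"
  assumes "E \<in> sets lebesgue" and "E \<subseteq> {0..<1}" and "emeasure lebesgue E > 0"
    and "IET T"
  shows "\<exists>x0\<in>{0..<1}. \<exists>\<alpha>::real. \<exists>\<beta>::real. \<alpha> > 0 \<and> \<beta> > 0 \<and>
           (\<forall>n::nat. n \<ge> 1 \<longrightarrow>
              real (card {i. i < n \<and> (T ^^ i) x0 \<in> E}) \<ge> \<alpha> * real n - \<beta>)"
proof (rule ccontr)
  assume H: "\<not> ?thesis"
  note Es = assms(1) and Esub = assms(2) and Epos = assms(3) and T = assms(4)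
  define m where "m = measure lebesgue E"
  have Efin: "emeasure lebesgue E \<le> 1" using sub01_props[OF Es Esub] by simp
  then have Eeq: "emeasure lebesgue E = ennreal m" unfolding m_def
    by (intro emeasure_eq_ennreal_measure) (auto simp: top_unique)
  have mpos: "m > 0" using Epos Eeq by simp
  define \<alpha> where "\<alpha> = m / 2"
  have apos: "\<alpha> > 0" using mpos by (simp add: \<alpha>_def)
  define B where "B i = {x\<in>{0..<1}. (T ^^ i) x \<in> E}" for i
  have Bs: "B i \<in> sets lebesgue" "emeasure lebesgue (B i) = emeasure lebesgue E" for i
    using iter_pre[OF T Es Esub, of i] unfolding B_def by auto
  have Bsub: "B i \<subseteq> {0..<1}" for i unfolding B_def by auto
  have Bmeas: "measure lebesgue (B i) = m" for i
    unfolding measure_def m_def using Bs(2) by simp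
  define S where "S n x = (\<Sum>i<n. indicator (B i) x :: real)" for n x
  have Smeas: "S n \<in> borel_measurable lebesgue" for n
    unfolding S_def using Bs(1) by (intro borel_measurable_sum borel_measurable_indicator) auto
  have cardS: "real (card {i. i < n \<and> (T ^^ i) x \<in> E}) = S n x" if "x \<in> {0..<1}" for n x
    unfolding card_sum S_def using that by (intro sum.cong) (auto simp: B_def indicator_def)
  have Hx: "\<exists>n\<ge>1. S n x < \<alpha> * real n" if "x \<in> {0..<1}" for x
  proof -
    have "\<not> (\<forall>n::nat. n \<ge> 1 \<longrightarrow>
              real (card {i. i < n \<and> (T ^^ i) x \<in> E}) \<ge> \<alpha> * real n - 1)"
    proof
      assume A: "\<forall>n::nat. n \<ge> 1 \<longrightarrow>
              real (card {i. i < n \<and> (T ^^ i) x \<in> E}) \<ge> \<alpha> * real n - 1"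
      have "\<exists>x0\<in>{0..<1}. \<exists>\<alpha>::real. \<exists>\<beta>::real. \<alpha> > 0 \<and> \<beta> > 0 \<and>
           (\<forall>n::nat. n \<ge> 1 \<longrightarrow>
              real (card {i. i < n \<and> (T ^^ i) x0 \<in> E}) \<ge> \<alpha> * real n - \<beta>)"
        using that apos A by (intro bexI[of _ x] exI[of _ \<alpha>] exI[of _ 1]) auto
      with H show False by blast
    qed
    then obtain n where "n \<ge> 1" "real (card {i. i < n \<and> (T ^^ i) x \<in> E}) < \<alpha> * real n - 1"
      by force
    then show ?thesis using cardS[OF that] by (intro exI[of _ n]) auto
  qed
  define G where "G N = {x\<in>{0..<1}. \<forall>n\<in>{1..N}. \<alpha> * real n \<le> S n x}" for N
  have Gs: "G N \<in> sets lebesgue" for N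
  proof -
    have eq: "G N = {0..<1} \<inter> (\<Inter>n\<in>{1..N}. {x \<in> space lebesgue. \<alpha> * real n \<le> S n x})"
      unfolding G_def by auto
    have m1: "{x \<in> space lebesgue. \<alpha> * real n \<le> S n x} \<in> sets lebesgue" for n
      using Smeas[of n] by (intro borel_measurable_le) auto
    have m2: "(\<Inter>n\<in>{1..N}. {x \<in> space lebesgue. \<alpha> * real n \<le> S n x}) \<in> sets lebesgue"
    proof (cases "N = 0")
      case True then show ?thesis by simp
    next
      case False
      then show ?thesis using m1 by (intro sets.finite_INT) auto
    qed
    have m3: "{0..<1::real} \<in> sets lebesgue" by simp
    show ?thesis unfolding eq by (rule sets.Int[OF m3 m2])
  qed
  have Gsub: "G N \<subseteq> {0..<1}" for N unfolding G_def by auto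
  have Gdec: "decseq G" unfolding decseq_def G_def by auto
  have Gint: "(\<Inter>N. G N) = {}"
  proof (rule ccontr)
    assume "(\<Inter>N. G N) \<noteq> {}"
    then obtain x where x: "\<And>N. x \<in> G N" by auto
    then have "x \<in> {0..<1}" unfolding G_def by auto
    then obtain n where n: "n \<ge> 1" "S n x < \<alpha> * real n" using Hx by blast
    have "\<alpha> * real n \<le> S n x" using x[of n] n(1) unfolding G_def by auto
    with n(2) show False by linarith
  qed
  have Gfin0: "emeasure lebesgue (G N) \<noteq> top" for N
    using order.strict_trans1[OF sub01_props(1)[OF Gs Gsub, of N] ennreal_one_less_top] by (rule less_imp_neq)
  have Gfin: "emeasure lebesgue (G N) \<noteq> \<infinity>" for N
    using Gfin0[of N] by (metis infinity_ennreal_def)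
  have "range G \<subseteq> sets lebesgue" using Gs by blast
  then have "(\<lambda>N. emeasure lebesgue (G N)) \<longlonglongrightarrow> emeasure lebesgue (\<Inter>N. G N)"
    by (rule Lim_emeasure_decseq[OF _ Gdec Gfin])
  then have "(\<lambda>N. emeasure lebesgue (G N)) \<longlonglongrightarrow> 0" using Gint by simp
  moreover have "(0::ennreal) < ennreal (m / 4)" using mpos by simp
  ultimately have "eventually (\<lambda>N. emeasure lebesgue (G N) < ennreal (m / 4)) sequentially"
    by (rule order_tendstoD(2))
  then obtain N where GN: "emeasure lebesgue (G N) < ennreal (m / 4)"
    by (auto simp: eventually_sequentially)
  define g where "g = measure lebesgue (G N)"
  have Geq: "emeasure lebesgue (G N) = ennreal g" unfolding g_def
    by (rule emeasure_eq_ennreal_measure[OF Gfin0])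
  have g0: "g \<ge> 0" unfolding g_def by simp
  have gm: "g < m / 4" using GN Geq g0 mpos by (simp add: ennreal_less_iff)
  define C where "C i = {x\<in>{0..<1}. (T ^^ i) x \<in> G N}" for i
  have Cs: "C i \<in> sets lebesgue" "emeasure lebesgue (C i) = emeasure lebesgue (G N)" for i
    using iter_pre[OF T Gs Gsub, of i] unfolding C_def by auto
  have Csub: "C i \<subseteq> {0..<1}" for i unfolding C_def by auto
  have Cmeas: "measure lebesgue (C i) = g" for i
    unfolding measure_def g_def using Cs(2) by simp
  define L :: nat where "L = nat \<lceil>4 * real N / m\<rceil> + 1"
  have L1: "L \<ge> 1" unfolding L_def by simp
  have LN: "real N \<le> real L * m / 4"
  proof -
    have "4 * real N / m \<le> real (nat \<lceil>4 * real N / m\<rceil>)" by linarith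
    also have "\<dots> \<le> real L" unfolding L_def by simp
    finally have "4 * real N / m \<le> real L" .
    then show ?thesis using mpos by (simp add: field_simps)
  qed
  have pw: "(\<Sum>i<L. indicator (B i) x) \<le> (\<alpha> * real L + real N) * indicator {0..<1} x + (\<Sum>i<L. indicator (C i) x :: real)" for x
  proof (cases "x \<in> {0..<1}")
    case False
    then have "(\<Sum>i<L. indicator (B i) x :: real) = 0" unfolding B_def by (auto simp: indicator_def)
    moreover have "0 \<le> (\<Sum>i<L. indicator (C i) x :: real)" by (simp add: sum_nonneg)
    ultimately show ?thesis using False by simp
  next
    case x: True
    define a where "a i = (indicator (B i) x :: real)" for i
    define b where "b i = (indicator (C i) x :: real)" for i
    have hyp: "\<exists>n. 1 \<le> n \<and> n \<le> N \<and> (\<Sum>j\<in>{i..<n+i}. a j) < \<alpha> * real n" if "b i = 0" for i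
    proof -
      define y where "y = (T ^^ i) x"
      have y: "y \<in> {0..<1}" unfolding y_def using iter_maps[OF T x] .
      have "y \<notin> G N" using that x unfolding b_def C_def y_def by (auto simp: indicator_def)
      then obtain n where n: "n \<in> {1..N}" "S n y < \<alpha> * real n" unfolding G_def using y by auto
      have "S n y = (\<Sum>j<n. a (j + i))"
        unfolding S_def a_def
      proof (intro sum.cong refl)
        fix j
        have "(T ^^ j) y = (T ^^ (j + i)) x" unfolding y_def by (simp add: funpow_add)
        moreover have "(T ^^ j) y \<in> {0..<1}" using iter_maps[OF T y] .
        ultimately show "indicator (B j) y = (indicator (B (j + i)) x :: real)"
          using x y unfolding B_def by (auto simp: indicator_def)
      qed
      also have "\<dots> = (\<Sum>j\<in>{i..<n+i}. a j)"
        using sum.shift_bounds_nat_ivl[of a 0 i n] by (simp add: lessThan_atLeast0)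
      finally show ?thesis using n by auto
    qed
    have "(\<Sum>i\<in>{0..<L}. a i) \<le> \<alpha> * real (L - 0) + real N + (\<Sum>i\<in>{0..<L}. b i)"
      by (rule comb[of a b \<alpha> N]) (use hyp apos in \<open>auto simp: a_def b_def indicator_def\<close>)
    then show ?thesis using x unfolding a_def b_def by (simp add: lessThan_atLeast0)
  qed
  have ib: "integrable lebesgue (\<lambda>x. \<Sum>i<L. indicator (B i) x :: real)"
    using sub01_props(2)[OF Bs(1) Bsub] by auto
  have ic: "integrable lebesgue (\<lambda>x. (\<alpha> * real L + real N) * indicator {0..<1} x + (\<Sum>i<L. indicator (C i) x :: real))"
    using sub01_props(2)[OF Cs(1) Csub] sub01_props(2)[of "{0..<1}"] by auto
  have "integral\<^sup>L lebesgue (\<lambda>x. \<Sum>i<L. indicator (B i) x :: real)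
     \<le> integral\<^sup>L lebesgue (\<lambda>x. (\<alpha> * real L + real N) * indicator {0..<1} x + (\<Sum>i<L. indicator (C i) x :: real))"
    by (rule integral_mono[OF ib ic pw])
  moreover have "integral\<^sup>L lebesgue (\<lambda>x. \<Sum>i<L. indicator (B i) x :: real) = real L * m"
    using sub01_props(2,3)[OF Bs(1) Bsub] Bmeas by (simp add: integral_sum)
  moreover have "integral\<^sup>L lebesgue (\<lambda>x. (\<alpha> * real L + real N) * indicator {0..<1} x + (\<Sum>i<L. indicator (C i) x :: real))
     = (\<alpha> * real L + real N) + real L * g"
    using sub01_props(2,3)[OF Cs(1) Csub] sub01_props(2)[of "{0..<1}"] Cmeas
    by (simp add: integral_sum)
  ultimately have "real L * m \<le> \<alpha> * real L + real N + real L * g" by simp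
  moreover have "real L * g < real L * (m / 4)" using L1 gm by simp
  ultimately show False using LN unfolding \<alpha>_def by (simp add: field_simps)
qed

end
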